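(* Let $G=(\mathcal{V},\mathcal{C})$, and let $G^M_0=(\mathcal{V}^M_0,\mathcal{E}^M_0)$ with $\mathcal{V}^M_0=\{v: v\subseteq c\text{ for some }c\in\mathcal{C}\}$ and $\mathcal{E}^M_0=\{(c\to s): c,s\in\mathcal{V}^M_0,\ s\subsetneq c\}$. Let $\mathcal{C}_m=\{c\in\mathcal{C}:\ \text{there is no }\hat c\in\mathcal{C}\text{ with }c\subsetneq\hat c\}$ be the set of maximal clusters and $\mathcal{I}_m=\{c\cap c': c,c'\in\mathcal{C}_m\}$. Then every $v\in\mathcal{V}^M_0\setminus(\mathcal{C}\cup\mathcal{I}_m)$ is a redundant node w.r.t. $G^M_0$.
   Context: $\mathcal{V}=\{1,\dots,n\}$, each $x_i$ ranges over a finite set, $\mathbf{x}_s=(x_i)_{i\in s}$; $\mathcal{C}$ is a collection of subsets of $\mathcal{V}$. A marginal polytope diagram of $G=(\mathcal{V},\mathcal{C})$ is a pair $G^M=(\mathcal{V}^M,\mathcal{E}^M)$ with $\mathcal{C}\subseteq\mathcal{V}^M\subseteq 2^{\mathcal{V}}$ and $\mathcal{E}^M$ a set of directed edges $(c\to s)$ with $c,s\in\mathcal{V}^M$, $s\subseteq c$ ($G^M_0$ is one). For a set $E$ of pairs $(c\to s)$ with $s\subseteq c$, let $P(E)$ be the set of families $\boldsymbol\mu=(\mu_c)_{c\in\mathcal{C}}$ of real functions $\mu_c(\mathbf{x}_c)$ for which there exist real functions $\mu_w(\mathbf{x}_w)$ for all other subsets $w\subseteq\mathcal{V}$ with $\sum_{\mathbf{x}_{c\setminus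 s}}\mu_c(\mathbf{x}_c)=\mu_s(\mathbf{x}_s)$ for all $(c\to s)\in E$, $\mathbf{x}_s$. A node $v\in\mathcal{V}^M\setminus\mathcal{C}$ is redundant w.r.t. $G^M$ if $P(\mathcal{E}^M)=P(\hat{\mathcal{E}}^M)$, where $\hat{\mathcal{E}}^M=\big[\mathcal{E}^M\setminus(\{(c\to v)\in\mathcal{E}^M\}\cup\{(v\to s)\in\mathcal{E}^M\})\big]\cup\{(c\to s):(c\to v)\in\mathcal{E}^M,(v\to s)\in\mathcal{E}^M\}$. *)

theory Defs
  imports Complex_Main "HOL-Library.FuncSet"
begin

text \<open>Variables are natural numbers; a variable i takes values in D i.
  An assignment x_s to the variables of a set s is an extensional function
  in PiE s D. A family of local functions is a map mu :: nat set => (nat => 'a) => real,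
  where mu w is the function mu_w(x_w) on assignments of w.
  A directed edge (c -> s) is represented as the pair (c, s).\<close>

definition marg :: "(nat \<Rightarrow> 'a set) \<Rightarrow> ((nat \<Rightarrow> 'a) \<Rightarrow> real) \<Rightarrow> nat set \<Rightarrow> nat set \<Rightarrow> (nat \<Rightarrow> 'a) \<Rightarrow> real" where
  "marg D f c s xs = (\<Sum>y \<in> {y \<in> PiE c D. restrict y s = xs}. f y)"

text \<open>P(E): families (mu_c)_{c in C} for which there are functions mu_w for all other
  subsets w satisfying the marginalisation constraints of all edges in E.\<close>
definition Pset :: "(nat \<Rightarrow> 'a set) \<Rightarrow> nat set set \<Rightarrow> (nat set \<times> nat set) set
    \<Rightarrow> (nat set \<Rightarrow> (nat \<Rightarrow> 'a) \<Rightarrow> real) set" where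
  "Pset D C E = {mu. \<exists>nu. (\<forall>c\<in>C. \<forall>x\<in>PiE c D. nu c x = mu c x) \<and>
      (\<forall>(c, s)\<in>E. \<forall>xs\<in>PiE s D. marg D (nu c) c s xs = nu s xs)}"

definition edges_hat :: "(nat set \<times> nat set) set \<Rightarrow> nat set \<Rightarrow> (nat set \<times> nat set) set" where
  "edges_hat EM v = (EM - ({e \<in> EM. snd e = v} \<union> {e \<in> EM. fst e = v}))
      \<union> {(c, s). (c, v) \<in> EM \<and> (v, s) \<in> EM}"

definition redundant :: "(nat \<Rightarrow> 'a set) \<Rightarrow> nat set set \<Rightarrow> nat set set
    \<Rightarrow> (nat set \<times> nat set) set \<Rightarrow> nat set \<Rightarrow> bool" where
  "redundant D C VM EM v \<longleftrightarrow> v \<in> VM - C \<and> Pset D C EM = Pset D C (edges_hat EM v)"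

definition VM0 :: "nat set set \<Rightarrow> nat set set" where
  "VM0 C = {v. \<exists>c\<in>C. v \<subseteq> c}"

definition EM0 :: "nat set set \<Rightarrow> (nat set \<times> nat set) set" where
  "EM0 C = {(c, s). c \<in> VM0 C \<and> s \<in> VM0 C \<and> s \<subset> c}"

definition maximal_clusters :: "nat set set \<Rightarrow> nat set set" where
  "maximal_clusters C = {c \<in> C. \<not> (\<exists>c'\<in>C. c \<subset> c')}"

definition max_intersections :: "nat set set \<Rightarrow> nat set set" where
  "max_intersections C = {c \<inter> c' | c c'. c \<in> maximal_clusters C \<and> c' \<in> maximal_clusters C}"

end

theory Submission
  imports Defs
begin

lemma marg_trans:
  assumes fc: "finite c" and fD: "\<forall>i\<in>c. finite (D i)" and sw: "s \<subseteq> w" and wc: "w \<subseteq> c"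
   and g: "\<forall>y\<in>PiE w D. g y = marg D f c w y"
  shows "marg D g w s xs = marg D f c s xs"
proof -
  let ?A = "{z\<in>PiE c D. restrict z s = xs}"
  let ?B = "{y\<in>PiE w D. restrict y s = xs}"
  have finA: "finite (PiE c D)" using fc fD by (intro finite_PiE) auto
  have finB: "finite (PiE w D)" using fc fD wc by (intro finite_PiE) (auto intro: finite_subset)
  have "marg D g w s xs = (\<Sum>y\<in>?B. g y)" by (simp add: marg_def)
  also have "\<dots> = (\<Sum>y\<in>?B. marg D f c w y)" using g by (intro sum.cong) auto
  also have "\<dots> = (\<Sum>y\<in>?B. \<Sum>z\<in>{z. z \<in> ?A \<and> restrict z w = y}. f z)"
    unfolding marg_def
  proof (intro sum.cong refl)
    fix y assume y: "y \<in> ?B"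
    show "{z \<in> PiE c D. restrict z w = y} = {z. z \<in> ?A \<and> restrict z w = y}"
    proof safe
      fix z assume "z \<in> PiE c D" "y = restrict z w"
      then show "restrict z s = xs" using y sw by (auto simp: restrict_restrict Int_absorb1)
    qed
  qed
  also have "\<dots> = sum f ?A"
  proof (rule sum.group)
    show "finite ?A" using finA by auto
    show "finite ?B" using finB by auto
    show "(\<lambda>z. restrict z w) ` ?A \<subseteq> ?B"
      using sw wc by (auto simp: restrict_restrict Int_absorb1 PiE_def extensional_def Pi_def)
  qed
  finally show ?thesis unfolding marg_def .
qed

theorem proposition11:
  fixes n :: nat and D :: "nat \<Rightarrow> 'a set" and C :: "nat set set" and v :: "nat set"
  assumes "\<forall>i\<in>{1..n}. finite (D i)"
    and "\<forall>c\<in>C. c \<subseteq> {1..n}"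
    and "v \<in> VM0 C - (C \<union> max_intersections C)"
  shows "redundant D C (VM0 C) (EM0 C) v"
proof -
  have finC: "finite C" using assms(2) by (intro finite_subset[of C "Pow {1..n}"]) auto
  have VMsub: "a \<subseteq> {1..n}" if "a \<in> VM0 C" for a using that assms(2) unfolding VM0_def by blast
  have fa: "finite a" "\<forall>i\<in>a. finite (D i)" if "a \<in> VM0 C" for a
    using VMsub[OF that] assms(1) by (auto intro: finite_subset)
  have maxex: "\<exists>m\<in>maximal_clusters C. a \<subseteq> m" if aV0: "a \<in> VM0 C" for a
  proof -
    obtain c where c: "c \<in> C" "a \<subseteq> c" using aV0 unfolding VM0_def by blast
    obtain m where "m \<in> C" "c \<subseteq> m" "\<forall>b\<in>C. m \<subseteq> b \<longrightarrow> m = b"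
      using finite_has_maximal2[OF finC c(1)] by auto
    then show ?thesis using c unfolding maximal_clusters_def by (intro bexI[of _ m]) auto
  qed
  have maxVM: "m \<in> VM0 C" if "m \<in> maximal_clusters C" for m
    using that unfolding maximal_clusters_def VM0_def by auto
  have vVM: "v \<in> VM0 C" and vC: "v \<notin> C" and vI: "v \<notin> max_intersections C" using assms(3) by auto
  have hat: "edges_hat (EM0 C) v = EM0 C - ({e \<in> EM0 C. snd e = v} \<union> {e \<in> EM0 C. fst e = v})"
    unfolding edges_hat_def EM0_def by auto
  obtain m where m: "m \<in> maximal_clusters C" "v \<subseteq> m" using maxex[OF vVM] by blast
  have vm: "v \<noteq> m" using m vI unfolding max_intersections_def by blast
  have "Pset D C (edges_hat (EM0 C) v) \<subseteq> Pset D C (EM0 C)"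
  proof
    fix mu assume "mu \<in> Pset D C (edges_hat (EM0 C) v)"
    then obtain nu where nuC: "\<forall>c\<in>C. \<forall>x\<in>PiE c D. nu c x = mu c x"
      and nuE: "\<forall>(c, s)\<in>edges_hat (EM0 C) v. \<forall>xs\<in>PiE s D. marg D (nu c) c s xs = nu s xs"
      unfolding Pset_def by auto
    have E: "marg D (nu a) a b xs = nu b xs"
      if "a \<in> VM0 C" "b \<in> VM0 C" "b \<subset> a" "a \<noteq> v" "b \<noteq> v" "xs \<in> PiE b D" for a b xs
    proof -
      have "(a, b) \<in> edges_hat (EM0 C) v" unfolding hat using that unfolding EM0_def by auto
      then show ?thesis using nuE that(6) by auto
    qed
    have L: "marg D (nu b) b v xs = marg D (nu a) a v xs"
      if "a \<in> VM0 C" "b \<in> VM0 C" "v \<subset> b" "b \<subseteq> a" for a b xs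
    proof (cases "b = a")
      case False
      show ?thesis
        by (rule marg_trans[OF fa[OF that(1)]]) (use that False E in auto)
    qed simp
    have K: "marg D (nu m') m' v xs = marg D (nu m) m v xs"
      if "m' \<in> maximal_clusters C" "v \<subseteq> m'" for m' xs
    proof -
      let ?w = "m \<inter> m'"
      have "?w \<in> max_intersections C" using m that unfolding max_intersections_def by blast
      then have vw: "v \<subset> ?w" using vI m that by blast
      have wVM: "?w \<in> VM0 C" using maxVM[OF m(1)] unfolding VM0_def by blast
      show ?thesis using L[OF maxVM[OF m(1)] wVM vw] L[OF maxVM[OF that(1)] wVM vw] by simp
    qed
    define nu' where "nu' = nu(v := marg D (nu m) m v)"
    have "mu \<in> Pset D C (EM0 C)"
      unfolding Pset_def
    proof (intro CollectI exI[of _ nu'] conjI)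
      show "\<forall>c\<in>C. \<forall>x\<in>PiE c D. nu' c x = mu c x" using nuC vC unfolding nu'_def by auto
      show "\<forall>(c, s)\<in>EM0 C. \<forall>xs\<in>PiE s D. marg D (nu' c) c s xs = nu' s xs"
      proof (clarify)
        fix a b xs assume ab: "(a, b) \<in> EM0 C" and xs: "xs \<in> PiE b D"
        have aV: "a \<in> VM0 C" and bV: "b \<in> VM0 C" and ba: "b \<subset> a" using ab unfolding EM0_def by auto
        show "marg D (nu' a) a b xs = nu' b xs"
        proof (cases "b = v")
          case True
          then have av: "a \<noteq> v" using ba by auto
          obtain m' where m': "m' \<in> maximal_clusters C" "a \<subseteq> m'" using maxex[OF aV] by blast
          have "marg D (nu a) a v xs = marg D (nu m') m' v xs"
            using L[OF maxVM[OF m'(1)] aV] ba True m' by auto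
          also have "\<dots> = marg D (nu m) m v xs" using K[OF m'(1)] m' ba True by auto
          finally show ?thesis using True av unfolding nu'_def by simp
        next
          case False
          note bv = False
          show ?thesis
          proof (cases "a = v")
            case True
            have "marg D (nu' a) a b xs = marg D (nu m) m b xs"
              unfolding nu'_def True
              by (rule marg_trans[OF fa[OF maxVM[OF m(1)]]]) (use ba True m in auto)
            also have "\<dots> = nu b xs" using E[OF maxVM[OF m(1)] bV _ _ bv xs] ba True m vm by auto
            finally show ?thesis using bv unfolding nu'_def by simp
          next
            case False
            then show ?thesis using E[OF aV bV ba False bv xs] bv unfolding nu'_def by simp
          qed
        qed
      qed
    qed
    then show "mu \<in> Pset D C (EM0 C)" .
  qed
  moreover have "Pset D C (EM0 C) \<subseteq> Pset D C (edges_hat (EM0 C) v)"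
    unfolding Pset_def hat by blast
  ultimately show ?thesis unfolding redundant_def using vVM vC by blast
qed

end
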